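(* Let $G$ be a second countable, locally compact, Hausdorff groupoid with a Haar system, let $q\colon G^{(0)}\to G\backslash G^{(0)}$ be the orbit map, and define $G^{(0)}_{\le n}=\{u:|[u]|\le n\}$, $G^{(0)}_{\ge n}=\{u:|[u]|\ge n\}$, $G^{(0)}_n=\{u:|[u]|=n\}$. Then: (a) for $n\ge0$, $G^{(0)}_{\le n}$ is a closed invariant subset of $G^{(0)}$; (b) for $n\ge0$, $G^{(0)}_{\ge n}$ is an open invariant subset of $G^{(0)}$; (c) for $n\ge1$, $G^{(0)}_n$ is invariant and locally closed, hence locally compact; (d) for $n\ge1$, $q(G^{(0)}_n)$ is locally closed in $G\backslash G^{(0)}$ and is Hausdorff in the relative topology.
   Context: $G$ acts on $G^{(0)}$ by $\gamma\cdot s(\gamma)=r(\gamma)$; $[u]=r(s^{-1}(u))$ is the orbit of $u$ and $|[u]|$ its cardinality. $G\backslash G^{(0)}$ is the orbit space with the quotient topology. A subset $F$ is invariant if $F=r(s^{-1}(F))$. *)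

theory Defs
  imports "HOL-Analysis.Analysis" "HOL-Probability.Probability"
begin

text \<open>A groupoid whose set of arrows is the whole type 'g. r = range, s = source,
  m = (partial) multiplication, only meaningful on composable pairs (s x = r y),
  i = inversion. The unit space is range r.\<close>

definition groupoid :: "('g \<Rightarrow> 'g) \<Rightarrow> ('g \<Rightarrow> 'g) \<Rightarrow> ('g \<Rightarrow> 'g \<Rightarrow> 'g) \<Rightarrow> ('g \<Rightarrow> 'g) \<Rightarrow> bool" where
  "groupoid r s m i \<longleftrightarrow>
     (\<forall>x. r (r x) = r x \<and> s (r x) = r x \<and> r (s x) = s x \<and> s (s x) = s x) \<and>
     (\<forall>x y. s x = r y \<longrightarrow> r (m x y) = r x \<and> s (m x y) = s y) \<and>
     (\<forall>x y z. s x = r y \<and> s y = r z \<longrightarrow> m (m x y) z = m x (m y z)) \<and>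
     (\<forall>x. m (r x) x = x \<and> m x (s x) = x) \<and>
     (\<forall>x. r (i x) = s x \<and> s (i x) = r x \<and> m x (i x) = r x \<and> m (i x) x = s x)"

definition topological_groupoid ::
  "('g::topological_space \<Rightarrow> 'g) \<Rightarrow> ('g \<Rightarrow> 'g) \<Rightarrow> ('g \<Rightarrow> 'g \<Rightarrow> 'g) \<Rightarrow> ('g \<Rightarrow> 'g) \<Rightarrow> bool" where
  "topological_groupoid r s m i \<longleftrightarrow>
     groupoid r s m i \<and> continuous_on UNIV r \<and> continuous_on UNIV s \<and> continuous_on UNIV i \<and>
     continuous_on {(x, y). s x = r y} (\<lambda>(x, y). m x y)"

text \<open>Haar system: a family of Radon measures lambda u (u a unit) on the arrows, with
  support exactly G^u = r^-1(u), continuous (u maps to the integral of f is continuous for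
  f in C_c(G)), and left invariant (x lambda^{s x} = lambda^{r x}).\<close>

definition haar_system ::
  "('g::topological_space \<Rightarrow> 'g) \<Rightarrow> ('g \<Rightarrow> 'g) \<Rightarrow> ('g \<Rightarrow> 'g \<Rightarrow> 'g) \<Rightarrow> ('g \<Rightarrow> 'g measure) \<Rightarrow> bool" where
  "haar_system r s m lam \<longleftrightarrow>
     (\<forall>u\<in>range r.
        sets (lam u) = sets borel \<and>
        emeasure (lam u) (- (r -` {u})) = 0 \<and>
        (\<forall>U. open U \<and> U \<inter> r -` {u} \<noteq> {} \<longrightarrow> emeasure (lam u) U > 0) \<and>
        (\<forall>K. compact K \<longrightarrow> emeasure (lam u) K < \<infinity>)) \<and>
     (\<forall>f :: 'g \<Rightarrow> real. continuous_on UNIV f \<and> (\<exists>K. compact K \<and> (\<forall>x. x \<notin> K \<longrightarrow> f x = 0))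
        \<longrightarrow> continuous_on (range r) (\<lambda>u. integral\<^sup>L (lam u) f)) \<and>
     (\<forall>x. \<forall>A\<in>sets borel.
        emeasure (lam (r x)) A = emeasure (lam (s x)) {y. r y = s x \<and> m x y \<in> A})"

definition orbit :: "('g \<Rightarrow> 'g) \<Rightarrow> ('g \<Rightarrow> 'g) \<Rightarrow> 'g \<Rightarrow> 'g set" where
  "orbit r s u = r ` (s -` {u})"

definition invariant :: "('g \<Rightarrow> 'g) \<Rightarrow> ('g \<Rightarrow> 'g) \<Rightarrow> 'g set \<Rightarrow> bool" where
  "invariant r s F \<longleftrightarrow> F = r ` (s -` F)"

definition units_le :: "('g \<Rightarrow> 'g) \<Rightarrow> ('g \<Rightarrow> 'g) \<Rightarrow> nat \<Rightarrow> 'g set" where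
  "units_le r s n = {u \<in> range r. finite (orbit r s u) \<and> card (orbit r s u) \<le> n}"

definition units_ge :: "('g \<Rightarrow> 'g) \<Rightarrow> ('g \<Rightarrow> 'g) \<Rightarrow> nat \<Rightarrow> 'g set" where
  "units_ge r s n = {u \<in> range r. infinite (orbit r s u) \<or> card (orbit r s u) \<ge> n}"

definition units_eq :: "('g \<Rightarrow> 'g) \<Rightarrow> ('g \<Rightarrow> 'g) \<Rightarrow> nat \<Rightarrow> 'g set" where
  "units_eq r s n = {u \<in> range r. finite (orbit r s u) \<and> card (orbit r s u) = n}"

definition locally_closedin :: "'a topology \<Rightarrow> 'a set \<Rightarrow> bool" where
  "locally_closedin X S \<longleftrightarrow> (\<exists>U C. openin X U \<and> closedin X C \<and> S = U \<inter> C)"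

end

theory Submission
  imports Defs
begin

locale gpd =
  fixes r s i :: "'g::{t2_space, second_countable_topology} \<Rightarrow> 'g"
    and m :: "'g \<Rightarrow> 'g \<Rightarrow> 'g"
    and lam :: "'g \<Rightarrow> 'g measure"
  assumes tg: "topological_groupoid r s m i"
    and lc: "locally compact (UNIV :: 'g set)"
    and hs: "haar_system r s m lam"
begin

lemma G: "groupoid r s m i" using tg by (simp add: topological_groupoid_def)

lemma rr[simp]: "r (r x) = r x" and sr[simp]: "s (r x) = r x" and rs[simp]: "r (s x) = s x" and ss[simp]: "s (s x) = s x"
  using G by (auto simp: groupoid_def)

lemma rm: "s x = r y \<Longrightarrow> r (m x y) = r x" and sm: "s x = r y \<Longrightarrow> s (m x y) = s y"
  using G by (auto simp: groupoid_def)

lemma ri[simp]: "r (i x) = s x" and si[simp]: "s (i x) = r x"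
  using G by (auto simp: groupoid_def)

lemma ii[simp]: "i (i x) = x"
proof -
  have A: "\<forall>x y z. s x = r y \<and> s y = r z \<longrightarrow> m (m x y) z = m x (m y z)"
   and U: "\<forall>x. m (r x) x = x \<and> m x (s x) = x"
   and I: "\<forall>x. r (i x) = s x \<and> s (i x) = r x \<and> m x (i x) = r x \<and> m (i x) x = s x"
    using G by (auto simp: groupoid_def)
  let ?y = "i x"
  have "i ?y = m (i ?y) (s (i ?y))" using U by metis
  also have "s (i ?y) = s x" by simp
  also have "s x = m ?y x" using I by metis
  also have "m (i ?y) (m ?y x) = m (m (i ?y) ?y) x" using A by simp
  also have "m (i ?y) ?y = s ?y" using I by metis
  also have "m (s ?y) x = x" using U by simp
  finally show ?thesis .
qed

lemma cont_r: "continuous_on UNIV r" and cont_s: "continuous_on UNIV s" and cont_i: "continuous_on UNIV i"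
  using tg by (auto simp: topological_groupoid_def)

lemma range_r: "u \<in> range r \<longleftrightarrow> r u = u"
  by (metis rangeI rr image_iff)

lemma orbit_rs: "orbit r s (r g) = orbit r s (s g)"
proof -
  have A: "\<forall>x. m (r x) x = x \<and> m x (s x) = x" using G by (auto simp: groupoid_def)
  show ?thesis unfolding orbit_def
  proof safe
    fix d assume "s d = r g"
    then show "r d \<in> r ` s -` {s g}" using rm sm by (intro image_eqI[of _ _ "m d g"]) auto
  next
    fix d assume "s d = s g"
    then show "r d \<in> r ` s -` {r g}" using rm sm by (intro image_eqI[of _ _ "m d (i g)"]) auto
  qed
qed

lemma self_orbit: "u \<in> range r \<Longrightarrow> u \<in> orbit r s u"
  unfolding orbit_def using range_r by (metis image_eqI sr singletonI vimageI)

lemma orbit_mem: "v \<in> orbit r s u \<Longrightarrow> orbit r s v = orbit r s u"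
proof -
  assume "v \<in> orbit r s u"
  then obtain g where "v = r g" "u = s g" unfolding orbit_def by auto
  then show ?thesis using orbit_rs by simp
qed

lemma invariant_gen: "invariant r s {u \<in> range r. P (orbit r s u)}"
  unfolding invariant_def
proof (rule equalityI; rule subsetI)
  fix u assume "u \<in> {u \<in> range r. P (orbit r s u)}"
  then have u: "u \<in> range r" "P (orbit r s u)" by auto
  have "s u = u" "r u = u" using u range_r sr by metis+
  with u show "u \<in> r ` s -` {u \<in> range r. P (orbit r s u)}"
    by (intro image_eqI[of _ _ u]) auto
next
  fix v assume "v \<in> r ` s -` {u \<in> range r. P (orbit r s u)}"
  then obtain g where "v = r g" "s g \<in> range r" "P (orbit r s (s g))" by auto
  then show "v \<in> {u \<in> range r. P (orbit r s u)}" by (simp add: orbit_rs)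
qed

lemma hausdorff_eucl: "Hausdorff_space (euclidean :: 'g topology)"
  unfolding Hausdorff_space_def disjnt_def using separation_t2 by auto

lemma lc_nbhd:
  fixes W :: "'g set"
  assumes "open W" "g \<in> W"
  obtains V K where "open V" "compact K" "g \<in> V" "V \<subseteq> K" "K \<subseteq> W"
proof -
  have "openin (top_of_set UNIV) W \<and> g \<in> W" using assms by simp
  from lc[unfolded locally_def, rule_format, OF this]
  obtain V K where "openin (top_of_set UNIV) V" "compact K" "g \<in> V" "V \<subseteq> K" "K \<subseteq> W"
    by blast
  then show ?thesis using that by simp
qed

lemma lcs: "locally_compact_space (euclidean :: 'g topology)"
  unfolding locally_compact_space_def
proof
  fix x :: 'g
  obtain V K where "open V" "compact K" "x \<in> V" "V \<subseteq> K" "K \<subseteq> UNIV"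
    using lc_nbhd[of UNIV x] by auto
  then show "\<exists>U K. openin euclidean U \<and> compactin euclidean K \<and> x \<in> U \<and> U \<subseteq> K"
    by (metis compactin_euclidean_iff open_openin)
qed

lemma crs: "completely_regular_space (euclidean :: 'g topology)"
  using locally_compact_regular_imp_completely_regular_space[OF lcs] hausdorff_eucl by blast

lemma bump:
  fixes W :: "'g set"
  assumes "open W" "g \<in> W"
  obtains h :: "'g \<Rightarrow> real" and K where "continuous_on UNIV h" "compact K" "K \<subseteq> W"
    "\<And>x. x \<notin> K \<Longrightarrow> h x = 0" "\<And>x. h x \<noteq> 0 \<Longrightarrow> x \<in> W" "\<And>x. 0 \<le> h x" "\<And>x. h x \<le> 1" "h g = 1"
proof -
  obtain V K where VK: "open V" "compact K" "g \<in> V" "V \<subseteq> K" "K \<subseteq> W"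
    using lc_nbhd[OF assms] by blast
  have "closedin euclidean (- V)" using VK by (simp add: closed_Compl)
  moreover have "g \<in> topspace euclidean - (- V)" using VK by simp
  ultimately obtain f :: "'g \<Rightarrow> real" where f: "continuous_map euclidean (top_of_set {0..1}) f"
    "f g = 0" "f ` (- V) \<subseteq> {1}"
    using crs unfolding completely_regular_space_def by meson
  have fc: "continuous_on UNIV f" and fr: "\<And>x. f x \<in> {0..1}"
    using f(1) by (auto simp: continuous_map_in_subtopology)
  define h where "h x = 1 - f x" for x
  have "continuous_on UNIV h" unfolding h_def by (intro continuous_intros fc)
  moreover have "\<And>x. x \<notin> V \<Longrightarrow> h x = 0" using f(3) by (auto simp: h_def)
  ultimately show ?thesis
    using that[of h K] VK fr f(2) by (force simp: h_def)
qed

lemma r_open: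
  fixes W :: "'g set"
  assumes "open W" "g \<in> W"
  shows "\<exists>N. open N \<and> r g \<in> N \<and> N \<inter> range r \<subseteq> r ` W"
proof -
  obtain h :: "'g \<Rightarrow> real" and K where h: "continuous_on UNIV h" "compact K" "K \<subseteq> W"
    "\<And>x. x \<notin> K \<Longrightarrow> h x = 0" "\<And>x. h x \<noteq> 0 \<Longrightarrow> x \<in> W" "\<And>x. 0 \<le> h x" "\<And>x. h x \<le> 1" "h g = 1"
    using bump[OF assms] by blast
  have H1: "\<forall>u\<in>range r.
        sets (lam u) = sets borel \<and>
        emeasure (lam u) (- (r -` {u})) = 0 \<and>
        (\<forall>U. open U \<and> U \<inter> r -` {u} \<noteq> {} \<longrightarrow> emeasure (lam u) U > 0) \<and>
        (\<forall>K. compact K \<longrightarrow> emeasure (lam u) K < \<infinity>)"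
    and H2: "\<forall>f :: 'g \<Rightarrow> real. continuous_on UNIV f \<and> (\<exists>K. compact K \<and> (\<forall>x. x \<notin> K \<longrightarrow> f x = 0))
        \<longrightarrow> continuous_on (range r) (\<lambda>u. integral\<^sup>L (lam u) f)"
    using conjunct1[OF hs[unfolded haar_system_def]] conjunct1[OF conjunct2[OF hs[unfolded haar_system_def]]]
    by auto
  have H1s: "sets (lam u) = sets borel" "emeasure (lam u) (- (r -` {u})) = 0"
     "\<And>U. open U \<Longrightarrow> U \<inter> r -` {u} \<noteq> {} \<Longrightarrow> emeasure (lam u) U > 0"
     "\<And>K. compact K \<Longrightarrow> emeasure (lam u) K < \<infinity>" if "u \<in> range r" for u
    using H1[rule_format, OF that] by auto
  have "\<exists>K. compact K \<and> (\<forall>x. x \<notin> K \<longrightarrow> h x = 0)" using h(2,4) by blast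
  then have cont: "continuous_on (range r) (\<lambda>u. integral\<^sup>L (lam u) h)"
    using H2[rule_format, OF conjI[OF h(1)]] by blast
  define u0 where "u0 = r g"
  have u0: "u0 \<in> range r" by (simp add: u0_def)
  have sets0: "sets (lam u0) = sets borel" using H1s(1)[OF u0] .
  have sp0: "space (lam u0) = UNIV" using sets_eq_imp_space_eq[OF sets0] by simp
  have hm: "h \<in> borel_measurable (lam u0)"
    unfolding measurable_cong_sets[OF sets0 refl] by (rule borel_measurable_continuous_onI[OF h(1)])
  have Kb: "K \<in> sets (lam u0)" using sets0 h(2) by (simp add: compact_imp_closed)
  have "emeasure (lam u0) K < \<infinity>" using H1s(4)[OF u0 h(2)] .
  then have iK: "integrable (lam u0) (indicator K :: 'g \<Rightarrow> real)"
    using Kb sp0 by (simp add: integrable_indicator_iff)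
  have ih: "integrable (lam u0) h"
  proof (rule Bochner_Integration.integrable_bound[OF iK hm])
    show "AE x in lam u0. norm (h x) \<le> norm (indicator K x :: real)"
      using h(4,6,7) by (intro AE_I2) (auto simp: indicator_def)
  qed
  have nn: "0 \<le> integral\<^sup>L (lam u0) h" using h(6) by (simp add: integral_nonneg_AE)
  have "integral\<^sup>L (lam u0) h \<noteq> 0"
  proof
    assume "integral\<^sup>L (lam u0) h = 0"
    then have ae: "AE x in lam u0. h x = 0"
      using integral_nonneg_eq_0_iff_AE[OF ih] h(6) by simp
    define Oz where "Oz = h -` (- {0})"
    have oOz: "open Oz" unfolding Oz_def using h(1) open_Compl[OF closed_singleton[of "0::real"]] by (simp add: continuous_on_open_vimage)
    then have Obz: "Oz \<in> sets (lam u0)" using sets0 by simp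
    have "emeasure (lam u0) Oz = 0"
      using AE_iff_measurable[OF Obz, of "\<lambda>x. h x = 0"] ae sp0 by (auto simp: Oz_def)
    moreover have "g \<in> Oz \<inter> r -` {u0}" using h(8) by (simp add: Oz_def u0_def)
    then have "Oz \<inter> r -` {u0} \<noteq> {}" by blast
    ultimately show False using H1s(3)[OF u0 oOz] by simp
  qed
  with nn have pos: "integral\<^sup>L (lam u0) h > 0" by simp
  obtain A where A: "open A" "u0 \<in> A" "\<And>y. y \<in> range r \<Longrightarrow> y \<in> A \<Longrightarrow> integral\<^sup>L (lam y) h \<in> {0<..}"
    using cont[unfolded continuous_on_topological, rule_format, OF u0 open_greaterThan[of 0]] pos
    by auto
  have "A \<inter> range r \<subseteq> r ` W"
  proof
    fix u assume uA: "u \<in> A \<inter> range r"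
    show "u \<in> r ` W"
    proof (rule ccontr)
      assume nW: "u \<notin> r ` W"
      have setsu: "sets (lam u) = sets borel" and e0: "emeasure (lam u) (- (r -` {u})) = 0"
        using H1s(1,2)[of u] uA by auto
      have "closed {x. r x = (\<lambda>_. u) x}" by (rule closed_Collect_eq[OF cont_r continuous_on_const])
      then have "open (- (r -` {u}))" by (simp add: vimage_def open_Compl)
      then have "- (r -` {u}) \<in> sets (lam u)" using setsu by simp
      then have nul: "- (r -` {u}) \<in> null_sets (lam u)" using e0 by (simp add: null_sets_def)
      have "AE x in lam u. h x = 0"
      proof (rule AE_I'[OF nul])
        show "{x \<in> space (lam u). \<not> h x = 0} \<subseteq> - r -` {u}"
          using h(5) nW by auto
      qed
      then have "integral\<^sup>L (lam u) h = 0" by (rule integral_eq_zero_AE)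
      then show False using A(3)[of u] uA by simp
    qed
  qed
  then show ?thesis using A(1,2) unfolding u0_def by blast
qed

lemma s_open:
  fixes W :: "'g set"
  assumes "open W" "g \<in> W"
  shows "\<exists>N. open N \<and> s g \<in> N \<and> N \<inter> range r \<subseteq> s ` W"
proof -
  have "open (i -` W)" using cont_i assms(1) by (simp add: continuous_on_open_vimage)
  moreover have "i g \<in> i -` W" using assms by simp
  ultimately obtain N where N: "open N" "r (i g) \<in> N" "N \<inter> range r \<subseteq> r ` (i -` W)"
    using r_open by blast
  have sub: "r ` (i -` W) \<subseteq> s ` W"
  proof
    fix x assume "x \<in> r ` (i -` W)"
    then obtain y where "x = r y" "i y \<in> W" by auto
    then show "x \<in> s ` W" by (intro image_eqI[of _ _ "i y"]) auto
  qed
  have "N \<inter> range r \<subseteq> s ` W" using N(3) sub by (rule order_trans)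
  moreover have "s g \<in> N" using N(2) by simp
  ultimately show ?thesis using N(1) by blast
qed

lemma disjoint_open_family:
  fixes F :: "'g set" assumes "finite F"
  shows "\<exists>Op. (\<forall>v\<in>F. open (Op v) \<and> v \<in> Op v) \<and> (\<forall>v\<in>F. \<forall>w\<in>F. v \<noteq> w \<longrightarrow> Op v \<inter> Op w = {})"
  using assms
proof (induction F rule: finite_induct)
  case empty
  show ?case by (rule exI[of _ "\<lambda>_. {}"]) simp
next
  case (insert a F)
  from insert.IH obtain Op where Op0: "(\<forall>v\<in>F. open (Op v) \<and> v \<in> Op v) \<and> (\<forall>v\<in>F. \<forall>w\<in>F. v \<noteq> w \<longrightarrow> Op v \<inter> Op w = {})"
    by (rule exE)
  note Op = conjunct1[OF Op0] conjunct2[OF Op0]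
  have "compactin euclidean {a}" "compactin euclidean F" "disjnt {a} F"
    using insert by (auto simp: compactin_euclidean_iff finite_imp_compact disjnt_def)
  then obtain U V where UV: "openin euclidean U" "openin euclidean V" "{a} \<subseteq> U" "F \<subseteq> V" "disjnt U V"
    using hausdorff_eucl[unfolded Hausdorff_space_compact_sets, rule_format, of "{a}" F] by blast
  define Oq where "Oq v = (if v = a then U else Op v \<inter> V)" for v
  have "\<forall>v\<in>insert a F. open (Oq v) \<and> v \<in> Oq v"
    using Op(1) UV insert(2) by (auto simp: Oq_def)
  moreover have "\<forall>v\<in>insert a F. \<forall>w\<in>insert a F. v \<noteq> w \<longrightarrow> Oq v \<inter> Oq w = {}"
    using Op(2) UV(5) by (auto simp: Oq_def disjnt_def)
  ultimately show ?case by blast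
qed

lemma hit:
  fixes F :: "'g set"
  assumes "finite F" "F \<subseteq> orbit r s u" "\<forall>v\<in>F. open (Op v) \<and> v \<in> Op v"
  shows "\<exists>N. open N \<and> u \<in> N \<and> (\<forall>w\<in>N \<inter> range r. \<forall>v\<in>F. \<exists>z\<in>orbit r s w. z \<in> Op v)"
proof -
  have "\<forall>v\<in>F. \<exists>N. open N \<and> u \<in> N \<and> (\<forall>w\<in>N \<inter> range r. \<exists>z\<in>orbit r s w. z \<in> Op v)"
  proof
    fix v assume v: "v \<in> F"
    then obtain g where g: "v = r g" "u = s g" using assms(2) unfolding orbit_def by auto
    have oW: "open (r -` Op v)" using cont_r assms(3) v by (simp add: continuous_on_open_vimage)
    have "g \<in> r -` Op v" using g assms(3) v by simp
    then obtain N where N: "open N" "s g \<in> N" "N \<inter> range r \<subseteq> s ` (r -` Op v)"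
      using s_open[OF oW] by blast
    have "\<forall>w\<in>N \<inter> range r. \<exists>z\<in>orbit r s w. z \<in> Op v"
    proof
      fix w assume "w \<in> N \<inter> range r"
      then obtain d where "w = s d" "r d \<in> Op v" using N(3) by auto
      then show "\<exists>z\<in>orbit r s w. z \<in> Op v" unfolding orbit_def by auto
    qed
    then show "\<exists>N. open N \<and> u \<in> N \<and> (\<forall>w\<in>N \<inter> range r. \<exists>z\<in>orbit r s w. z \<in> Op v)"
      using N g by blast
  qed
  then obtain Nf where Nf: "\<forall>v\<in>F. open (Nf v) \<and> u \<in> Nf v \<and> (\<forall>w\<in>Nf v \<inter> range r. \<exists>z\<in>orbit r s w. z \<in> Op v)"
    by (rule bchoice[elim_format]) blast
  have "open (\<Inter>v\<in>F. Nf v)" using Nf assms(1) by (intro open_INT) auto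
  moreover have "u \<in> (\<Inter>v\<in>F. Nf v)" using Nf by auto
  moreover have "\<forall>w\<in>(\<Inter>v\<in>F. Nf v) \<inter> range r. \<forall>v\<in>F. \<exists>z\<in>orbit r s w. z \<in> Op v"
    using Nf by blast
  ultimately show ?thesis by blast
qed

lemma pick:
  assumes "\<forall>v\<in>F. \<exists>z\<in>S. z \<in> Op v" "\<forall>v\<in>F. \<forall>w\<in>F. v \<noteq> w \<longrightarrow> Op v \<inter> Op w = {}"
  shows "\<exists>f. inj_on f F \<and> f ` F \<subseteq> S \<and> (\<forall>v\<in>F. f v \<in> Op v)"
proof -
  have "\<forall>v\<in>F. \<exists>z. z \<in> S \<and> z \<in> Op v" using assms(1) by (simp add: Bex_def)
  from bchoice[OF this] obtain f where f: "\<forall>v\<in>F. f v \<in> S \<and> f v \<in> Op v" by (rule exE)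
  have "inj_on f F"
  proof (rule inj_onI, rule ccontr)
    fix v w assume vw: "v \<in> F" "w \<in> F" "f v = f w" "v \<noteq> w"
    then have "f v \<in> Op v \<inter> Op w" using f by auto
    moreover have "Op v \<inter> Op w = {}" using assms(2) vw by simp
    ultimately show False by simp
  qed
  moreover have "f ` F \<subseteq> S" using f by auto
  ultimately show ?thesis using f by blast
qed

lemma ge_open: "openin (top_of_set (range r)) (units_ge r s n)"
  unfolding openin_subopen[of _ "units_ge r s n"]
proof
  fix u assume u: "u \<in> units_ge r s n"
  obtain F where F: "finite F" "card F = n" "F \<subseteq> orbit r s u"
  proof (cases "finite (orbit r s u)")
    case True
    then have "n \<le> card (orbit r s u)" using u by (auto simp: units_ge_def)
    then show ?thesis using that obtain_subset_with_card_n by metis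
  next
    case False
    then show ?thesis using that infinite_arbitrarily_large by metis
  qed
  obtain Op where Op0: "(\<forall>v\<in>F. open (Op v) \<and> v \<in> Op v) \<and> (\<forall>v\<in>F. \<forall>w\<in>F. v \<noteq> w \<longrightarrow> Op v \<inter> Op w = {})"
    using disjoint_open_family[OF F(1)] by (rule exE)
  note Op = conjunct1[OF Op0] conjunct2[OF Op0]
  obtain N where N0: "open N \<and> u \<in> N \<and> (\<forall>w\<in>N \<inter> range r. \<forall>v\<in>F. \<exists>z\<in>orbit r s w. z \<in> Op v)"
    using hit[OF F(1,3) Op(1)] by (rule exE)
  note N = conjunct1[OF N0] conjunct1[OF conjunct2[OF N0]] conjunct2[OF conjunct2[OF N0]]
  have "range r \<inter> N \<subseteq> units_ge r s n"
  proof
    fix w assume w: "w \<in> range r \<inter> N"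
    then have "\<forall>v\<in>F. \<exists>z\<in>orbit r s w. z \<in> Op v" using N(3) by blast
    from pick[OF this Op(2)] obtain f where f0: "inj_on f F \<and> f ` F \<subseteq> orbit r s w \<and> (\<forall>v\<in>F. f v \<in> Op v)"
      by (rule exE)
    note f = conjunct1[OF f0] conjunct1[OF conjunct2[OF f0]]
    have "infinite (orbit r s w) \<or> card (orbit r s w) \<ge> n"
      using card_inj_on_le[OF f] F(2) by blast
    then show "w \<in> units_ge r s n" using w by (simp add: units_ge_def)
  qed
  moreover have "openin (top_of_set (range r)) (range r \<inter> N)" using N(1) by (rule openin_open_Int)
  ultimately show "\<exists>T. openin (top_of_set (range r)) T \<and> u \<in> T \<and> T \<subseteq> units_ge r s n"
    using N(2) u by (auto simp: units_ge_def)
qed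

lemma le_closed: "closedin (top_of_set (range r)) (units_le r s n)"
proof -
  have "range r - units_le r s n = units_ge r s (Suc n)"
    by (auto simp: units_le_def units_ge_def)
  then show ?thesis using ge_open[of "Suc n"] by (simp add: closedin_def units_le_def)
qed

lemma eq_nbhd:
  assumes u: "u \<in> units_eq r s n" and U: "open U" "orbit r s u \<subseteq> U"
  shows "\<exists>N. open N \<and> u \<in> N \<and> (\<forall>w\<in>N \<inter> units_eq r s n. orbit r s w \<subseteq> U)"
proof -
  define F where "F = orbit r s u"
  have F: "finite F" "card F = n" using u by (auto simp: units_eq_def F_def)
  obtain Op where Op0: "(\<forall>v\<in>F. open (Op v) \<and> v \<in> Op v) \<and> (\<forall>v\<in>F. \<forall>w\<in>F. v \<noteq> w \<longrightarrow> Op v \<inter> Op w = {})"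
    using disjoint_open_family[OF F(1)] by (rule exE)
  note Op = conjunct1[OF Op0] conjunct2[OF Op0]
  define Oq where "Oq v = Op v \<inter> U" for v
  have Oq: "\<forall>v\<in>F. open (Oq v) \<and> v \<in> Oq v" "\<forall>v\<in>F. \<forall>w\<in>F. v \<noteq> w \<longrightarrow> Oq v \<inter> Oq w = {}"
    using Op U by (auto simp: Oq_def F_def)
  obtain N where N0: "open N \<and> u \<in> N \<and> (\<forall>w\<in>N \<inter> range r. \<forall>v\<in>F. \<exists>z\<in>orbit r s w. z \<in> Oq v)"
    using hit[OF F(1) _ Oq(1)] unfolding F_def by (rule exE) (rule order_refl)
  note N = conjunct1[OF N0] conjunct1[OF conjunct2[OF N0]] conjunct2[OF conjunct2[OF N0]]
  have "\<forall>w\<in>N \<inter> units_eq r s n. orbit r s w \<subseteq> U"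
  proof
    fix w assume w: "w \<in> N \<inter> units_eq r s n"
    then have wr: "w \<in> N \<inter> range r" and wf: "finite (orbit r s w)" "card (orbit r s w) = n"
      by (auto simp: units_eq_def)
    have "\<forall>v\<in>F. \<exists>z\<in>orbit r s w. z \<in> Oq v" using N(3) wr by blast
    from pick[OF this Oq(2)] obtain f where f0: "inj_on f F \<and> f ` F \<subseteq> orbit r s w \<and> (\<forall>v\<in>F. f v \<in> Oq v)"
      by (rule exE)
    note f = conjunct1[OF f0] conjunct1[OF conjunct2[OF f0]] conjunct2[OF conjunct2[OF f0]]
    have "card (f ` F) = card (orbit r s w)" using card_image[OF f(1)] F(2) wf(2) by simp
    then have "f ` F = orbit r s w" using card_subset_eq[OF wf(1) f(2)] by simp
    moreover have "f ` F \<subseteq> U" using f(3) by (auto simp: Oq_def)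
    ultimately show "orbit r s w \<subseteq> U" by simp
  qed
  then show ?thesis using N by blast
qed

lemma lc_closed:
  fixes D :: "'g set" assumes "closed D"
  shows "locally compact D"
  unfolding locally_def
proof (intro allI impI)
  fix w x assume wx: "openin (top_of_set D) w \<and> x \<in> w"
  then obtain T where T: "open T" "w = D \<inter> T" by (auto simp: openin_open)
  obtain V K where VK: "open V" "compact K" "x \<in> V" "V \<subseteq> K" "K \<subseteq> T"
    using lc_nbhd[OF T(1), of x] wx T(2) by blast
  have "openin (top_of_set D) (D \<inter> V)" using VK(1) by (rule openin_open_Int)
  moreover have "compact (K \<inter> D)" using VK(2) assms by (rule compact_Int_closed)
  ultimately show "\<exists>u v. openin (top_of_set D) u \<and> compact v \<and> x \<in> u \<and> u \<subseteq> v \<and> v \<subseteq> w"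
    using VK wx T(2) by (intro exI[of _ "D \<inter> V"] exI[of _ "K \<inter> D"]) auto
qed

lemma eq_split: "units_eq r s n = units_ge r s n \<inter> units_le r s n"
  by (auto simp: units_eq_def units_ge_def units_le_def)

lemma eq_lc: "locally compact (units_eq r s n)"
proof -
  obtain U' where U': "open U'" "units_ge r s n = range r \<inter> U'"
    using ge_open[of n] by (auto simp: openin_open)
  obtain C' where C': "closed C'" "units_le r s n = range r \<inter> C'"
    using le_closed[of n] by (auto simp: closedin_closed)
  have "closed {x. r x = (\<lambda>x. x) x}" by (rule closed_Collect_eq[OF cont_r continuous_on_id])
  moreover have "{x. r x = (\<lambda>x. x) x} = range r" using range_r by auto
  ultimately have cR: "closed (range r)" by simp
  have eq: "units_eq r s n = U' \<inter> (range r \<inter> C')" using U'(2) C'(2) eq_split by auto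
  have "locally compact U'"
    using locally_open_subset[OF lc, of U'] U'(1) by simp
  moreover have "locally compact (range r \<inter> C')"
    using lc_closed cR C'(1) by (simp add: closed_Int)
  ultimately show ?thesis unfolding eq by (rule locally_compact_Int)
qed

lemma sat_open:
  fixes N :: "'g set" assumes "open N"
  shows "openin (top_of_set (range r)) {x \<in> range r. orbit r s x \<in> orbit r s ` (N \<inter> range r)}"
  unfolding openin_subopen[of _ "{x \<in> range r. orbit r s x \<in> orbit r s ` (N \<inter> range r)}"]
proof
  fix x assume x: "x \<in> {x \<in> range r. orbit r s x \<in> orbit r s ` (N \<inter> range r)}"
  then obtain z where z: "z \<in> N" "z \<in> range r" "orbit r s x = orbit r s z" by auto
  have "x \<in> orbit r s z" using x self_orbit z(3) by auto
  then obtain g where g: "x = r g" "s g = z" unfolding orbit_def by auto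
  have oW: "open (s -` N)" using cont_s assms by (simp add: continuous_on_open_vimage)
  have "g \<in> s -` N" using g z by simp
  from r_open[OF oW this] obtain N' where N'0: "open N' \<and> r g \<in> N' \<and> N' \<inter> range r \<subseteq> r ` (s -` N)"
    by (rule exE)
  note N' = conjunct1[OF N'0] conjunct1[OF conjunct2[OF N'0]] conjunct2[OF conjunct2[OF N'0]]
  have "range r \<inter> N' \<subseteq> {x \<in> range r. orbit r s x \<in> orbit r s ` (N \<inter> range r)}"
  proof
    fix y assume y: "y \<in> range r \<inter> N'"
    then obtain d where d: "y = r d" "s d \<in> N" using N'(3) by auto
    have "s d \<in> range r" by (metis rangeI rs)
    then have "orbit r s y \<in> orbit r s ` (N \<inter> range r)"
      using d orbit_rs by auto
    then show "y \<in> {x \<in> range r. orbit r s x \<in> orbit r s ` (N \<inter> range r)}" using y by simp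
  qed
  moreover have "openin (top_of_set (range r)) (range r \<inter> N')" using N'(1) by (rule openin_open_Int)
  ultimately show "\<exists>T. openin (top_of_set (range r)) T \<and> x \<in> T \<and> T \<subseteq> {x \<in> range r. orbit r s x \<in> orbit r s ` (N \<inter> range r)}"
    using N'(2) g x by blast
qed

end

theorem proposition4p6:
  fixes r s i :: "'g::{t2_space, second_countable_topology} \<Rightarrow> 'g"
    and m :: "'g \<Rightarrow> 'g \<Rightarrow> 'g"
    and lam :: "'g \<Rightarrow> 'g measure"
    and Q :: "'g set topology"
  assumes "topological_groupoid r s m i"
    and "locally compact (UNIV :: 'g set)"
    and "haar_system r s m lam"
    and "quotient_map (top_of_set (range r)) Q (orbit r s)"
  shows "(\<forall>n::nat. closedin (top_of_set (range r)) (units_le r s n) \<and> invariant r s (units_le r s n))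
       \<and> (\<forall>n::nat. openin (top_of_set (range r)) (units_ge r s n) \<and> invariant r s (units_ge r s n))
       \<and> (\<forall>n::nat. n \<ge> 1 \<longrightarrow> invariant r s (units_eq r s n)
              \<and> locally_closedin (top_of_set (range r)) (units_eq r s n)
              \<and> locally compact (units_eq r s n))
       \<and> (\<forall>n::nat. n \<ge> 1 \<longrightarrow> locally_closedin Q (orbit r s ` units_eq r s n)
              \<and> Hausdorff_space (subtopology Q (orbit r s ` units_eq r s n)))"
proof -
  interpret G: gpd r s i m lam using assms(1-3) by unfold_locales
  define R where "R = range r"
  define q where "q = orbit r s"
  have Q1: "q ` R = topspace Q" and
    Q2: "\<And>U. U \<subseteq> topspace Q \<Longrightarrow> openin (top_of_set R) {x \<in> R. q x \<in> U} \<longleftrightarrow> openin Q U" and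
    Q3: "\<And>U. U \<subseteq> topspace Q \<Longrightarrow> closedin (top_of_set R) {x \<in> R. q x \<in> U} \<longleftrightarrow> closedin Q U"
    using assms(4) quotient_map_closedin[of "top_of_set (range r)" Q "orbit r s"]
    unfolding quotient_map_def R_def q_def by auto
  have geF: "units_ge r s n = {u \<in> R. (\<lambda>X. infinite X \<or> n \<le> card X) (q u)}" for n
    by (simp add: units_ge_def R_def q_def)
  have leF: "units_le r s n = {u \<in> R. (\<lambda>X. finite X \<and> card X \<le> n) (q u)}" for n
    by (simp add: units_le_def R_def q_def)
  have eqF: "units_eq r s n = {u \<in> R. (\<lambda>X. finite X \<and> card X = n) (q u)}" for n
    by (simp add: units_eq_def R_def q_def)
  have sat: "{x \<in> R. q x \<in> q ` {u \<in> R. P (q u)}} = {u \<in> R. P (q u)}" for P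
    by auto
  have inv: "invariant r s {u \<in> R. P (q u)}" for P
    unfolding R_def q_def by (rule G.invariant_gen)
  have A: "\<forall>n::nat. closedin (top_of_set (range r)) (units_le r s n) \<and> invariant r s (units_le r s n)"
  proof (intro allI conjI)
    fix n :: nat
    show "closedin (top_of_set (range r)) (units_le r s n)" by (rule G.le_closed)
    show "invariant r s (units_le r s n)" unfolding leF by (rule inv)
  qed
  have B: "\<forall>n::nat. openin (top_of_set (range r)) (units_ge r s n) \<and> invariant r s (units_ge r s n)"
  proof (intro allI conjI)
    fix n :: nat
    show "openin (top_of_set (range r)) (units_ge r s n)" by (rule G.ge_open)
    show "invariant r s (units_ge r s n)" unfolding geF by (rule inv)
  qed
  have lcl: "locally_closedin (top_of_set (range r)) (units_eq r s n)" for n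
    unfolding locally_closedin_def using G.ge_open[of n] G.le_closed[of n] G.eq_split[of n] by blast
  have C: "\<forall>n::nat. n \<ge> 1 \<longrightarrow> invariant r s (units_eq r s n)
              \<and> locally_closedin (top_of_set (range r)) (units_eq r s n)
              \<and> locally compact (units_eq r s n)"
  proof (intro allI impI conjI)
    fix n :: nat
    show "invariant r s (units_eq r s n)" unfolding eqF by (rule inv)
    show "locally_closedin (top_of_set (range r)) (units_eq r s n)" by (rule lcl)
    show "locally compact (units_eq r s n)" by (rule G.eq_lc)
  qed
  have qsub: "q ` S \<subseteq> topspace Q" if "S \<subseteq> R" for S
    using Q1 that by blast
  have geQ: "openin Q (q ` units_ge r s n)" for n
  proof -
    have e: "{x \<in> R. q x \<in> q ` units_ge r s n} = units_ge r s n"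
      unfolding geF by (rule sat)
    have "openin (top_of_set R) {x \<in> R. q x \<in> q ` units_ge r s n}"
      unfolding e unfolding R_def by (rule G.ge_open)
    then show ?thesis using Q2[OF qsub] geF by (simp add: R_def)
  qed
  have leQ: "closedin Q (q ` units_le r s n)" for n
  proof -
    have e: "{x \<in> R. q x \<in> q ` units_le r s n} = units_le r s n"
      unfolding leF by (rule sat)
    have "closedin (top_of_set R) {x \<in> R. q x \<in> q ` units_le r s n}"
      unfolding e unfolding R_def by (rule G.le_closed)
    then show ?thesis using Q3[OF qsub] leF by (simp add: R_def)
  qed
  have qeq: "q ` units_eq r s n = q ` units_ge r s n \<inter> q ` units_le r s n" for n
  proof
    show "q ` units_eq r s n \<subseteq> q ` units_ge r s n \<inter> q ` units_le r s n"
      using G.eq_split by blast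
  next
    show "q ` units_ge r s n \<inter> q ` units_le r s n \<subseteq> q ` units_eq r s n"
    proof
      fix c assume "c \<in> q ` units_ge r s n \<inter> q ` units_le r s n"
      then obtain a b where ab: "a \<in> units_ge r s n" "b \<in> units_le r s n" "c = q a" "c = q b" by blast
      have "b \<in> units_eq r s n" using ab unfolding geF leF eqF by auto
      then show "c \<in> q ` units_eq r s n" using ab by blast
    qed
  qed
  have Dlc: "locally_closedin Q (q ` units_eq r s n)" for n
    unfolding locally_closedin_def qeq using geQ leQ by blast
  have Dh: "Hausdorff_space (subtopology Q (q ` units_eq r s n))" for n
    unfolding Hausdorff_space_def
  proof (intro allI impI)
    let ?E = "units_eq r s n"
    fix x y assume xy: "x \<in> topspace (subtopology Q (q ` ?E)) \<and> y \<in> topspace (subtopology Q (q ` ?E)) \<and> x \<noteq> y"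
    then obtain u v where uv: "u \<in> ?E" "v \<in> ?E" "x = q u" "y = q v" "q u \<noteq> q v" by auto
    have ER: "?E \<subseteq> R" by (auto simp: units_eq_def R_def)
    have fin: "finite (q u)" "finite (q v)" using uv by (auto simp: units_eq_def q_def)
    have dj: "disjnt (q u) (q v)"
    proof -
      have "False" if "w \<in> q u" "w \<in> q v" for w
        using G.orbit_mem that uv(5) unfolding q_def by metis
      then show ?thesis by (auto simp: disjnt_def)
    qed
    have "compactin euclidean (q u)" "compactin euclidean (q v)"
      using fin by (auto simp: compactin_euclidean_iff finite_imp_compact)
    from G.hausdorff_eucl[unfolded Hausdorff_space_compact_sets, rule_format, OF conjI[OF this(1) conjI[OF this(2) dj]]]
    obtain U0 V0 where UV0: "openin euclidean U0 \<and> openin euclidean V0 \<and> q u \<subseteq> U0 \<and> q v \<subseteq> V0 \<and> disjnt U0 V0"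
      by (elim exE)
    then have UV: "open U0" "open V0" "q u \<subseteq> U0" "q v \<subseteq> V0" "disjnt U0 V0" by auto
    from G.eq_nbhd[OF uv(1) UV(1) UV(3)[unfolded q_def]]
    obtain Nu where Nu0: "open Nu \<and> u \<in> Nu \<and> (\<forall>w\<in>Nu \<inter> ?E. orbit r s w \<subseteq> U0)" by (rule exE)
    from G.eq_nbhd[OF uv(2) UV(2) UV(4)[unfolded q_def]]
    obtain Nv where Nv0: "open Nv \<and> v \<in> Nv \<and> (\<forall>w\<in>Nv \<inter> ?E. orbit r s w \<subseteq> V0)" by (rule exE)
    define OU where "OU = q ` (Nu \<inter> R)"
    define OV where "OV = q ` (Nv \<inter> R)"
    have oOU: "openin Q OU"
    proof -
      have "openin (top_of_set R) {x \<in> R. q x \<in> OU}"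
        using G.sat_open[of Nu] Nu0 unfolding OU_def R_def q_def by simp
      then show ?thesis using Q2[of OU] qsub[of "Nu \<inter> R"] unfolding OU_def by auto
    qed
    have oOV: "openin Q OV"
    proof -
      have "openin (top_of_set R) {x \<in> R. q x \<in> OV}"
        using G.sat_open[of Nv] Nv0 unfolding OV_def R_def q_def by simp
      then show ?thesis using Q2[of OV] qsub[of "Nv \<inter> R"] unfolding OV_def by auto
    qed
    have memE: "a \<in> ?E" if "a \<in> R" "q a = q e" "e \<in> ?E" for a e
      using that unfolding eqF by auto
    have "disjnt (OU \<inter> q ` ?E) (OV \<inter> q ` ?E)"
      unfolding disjnt_def
    proof (rule ccontr)
      assume "OU \<inter> q ` ?E \<inter> (OV \<inter> q ` ?E) \<noteq> {}"
      then obtain a b e where abe: "a \<in> Nu" "a \<in> R" "b \<in> Nv" "b \<in> R" "e \<in> ?E" "q a = q e" "q b = q e"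
        unfolding OU_def OV_def by blast
      have aE: "a \<in> ?E" using memE abe by blast
      have bE: "b \<in> ?E" using memE abe by blast
      have "q a \<subseteq> U0" using Nu0 aE abe(1) unfolding q_def by blast
      moreover have "q b \<subseteq> V0" using Nv0 bE abe(3) unfolding q_def by blast
      moreover have "a \<in> q a" using G.self_orbit abe(2) unfolding q_def R_def by blast
      ultimately show False using UV(5) abe(6,7) by (auto simp: disjnt_def)
    qed
    moreover have "openin (subtopology Q (q ` ?E)) (OU \<inter> q ` ?E)"
      using oOU by (auto simp: openin_subtopology)
    moreover have "openin (subtopology Q (q ` ?E)) (OV \<inter> q ` ?E)"
      using oOV by (auto simp: openin_subtopology)
    moreover have "x \<in> OU \<inter> q ` ?E" using uv Nu0 ER unfolding OU_def by blast
    moreover have "y \<in> OV \<inter> q ` ?E" using uv Nv0 ER unfolding OV_def by blast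
    ultimately show "\<exists>U V. openin (subtopology Q (q ` ?E)) U \<and> openin (subtopology Q (q ` ?E)) V \<and> x \<in> U \<and> y \<in> V \<and> disjnt U V"
      by blast
  qed
  show ?thesis using A B C Dlc Dh unfolding q_def by blast
qed

end
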